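(* Let $q\ge2$, $G\in\mathbb G^q$ and $S=\Psi(G)$. Let $w$ be a white vertex of $S$ and suppose some edge $e$ incident to $w$ is a bridge of $S$ such that the connected component of $S\setminus e$ not containing $w$ is a tree. Then $w$ is admissible.
   Context: Fix an integer $q\ge 2$. A $(q+1)$-edge-colored graph (colored graph) is a finite connected graph, multiple edges allowed and no loops, whose edges carry colors in $\{0,1,\dots,q\}$ such that every vertex is incident to exactly one edge of each color. It is rooted if one color-0 edge is distinguished and oriented; it is bipartite if its vertices can be colored black and white so that every edge joins a black and a white vertex, with the convention that the origin of the root edge is black. $\mathbb G^q$ denotes the set of rooted bipartite colored graphs. Constellations: given $G\in\mathbb G^q$, its constellation $S=\Psi(G)$ is obtained as follows: orient every edge from its black to its white endpoint; contract every color-0 edge into a single vertex, called a white vertex of $S$ (the one coming from the root edge is the root vertex). For each $i\in\{1,\dots,q\}$ the color-$i$ edges now form directed cycles; for each such cycle, passing through white vertices $w_1,\dots,w_p$ in this cyclic order, add a new vertex of color $i$ joined by one color-$i$ edge to each $w_k$, equip the new vertex with the cyclic order $(w_1,\dots,w_p)$ of its incident edges, and delete the original color-$i$ edges of the cycle. $\Psi$ is a bijection from $\mathbb G^q$ onto the set of resulting objects ($q$-constellations). A white vertex $w$ of $S=\Psi(G)$ is admissible if the two endpoints of the color-0 edge of $G$ contracted to $w$ are joined in $G$ by a path containing no color-0 edge. *)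

theory Defs
  imports Main
begin

text \<open>A graph is given by a vertex set V, an edge set E, an endpoint map ends
  (each edge has a set of exactly two endpoints, so no loops; multiple edges allowed)
  and a colour map col.\<close>

definition adj_rel :: "'e set \<Rightarrow> ('e \<Rightarrow> 'v set) \<Rightarrow> ('v \<times> 'v) set" where
  "adj_rel E ends = {(u, v). \<exists>e\<in>E. ends e = {u, v}}"

definition mg_connected :: "'v set \<Rightarrow> 'e set \<Rightarrow> ('e \<Rightarrow> 'v set) \<Rightarrow> bool" where
  "mg_connected V E ends \<longleftrightarrow> V \<noteq> {} \<and> (\<forall>u\<in>V. \<forall>v\<in>V. (u, v) \<in> (adj_rel E ends)\<^sup>*)"

definition colored_graph ::
  "nat \<Rightarrow> 'v set \<Rightarrow> 'e set \<Rightarrow> ('e \<Rightarrow> 'v set) \<Rightarrow> ('e \<Rightarrow> nat) \<Rightarrow> bool" where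
  "colored_graph q V E ends col \<longleftrightarrow>
     finite V \<and> finite E \<and>
     (\<forall>e\<in>E. ends e \<subseteq> V \<and> card (ends e) = 2 \<and> col e \<le> q) \<and>
     (\<forall>v\<in>V. \<forall>i\<le>q. \<exists>!e. e \<in> E \<and> v \<in> ends e \<and> col e = i) \<and>
     mg_connected V E ends"

definition rooted_bipartite_colored_graph ::
  "nat \<Rightarrow> 'v set \<Rightarrow> 'e set \<Rightarrow> ('e \<Rightarrow> 'v set) \<Rightarrow> ('e \<Rightarrow> nat) \<Rightarrow> 'e \<Rightarrow> 'v \<Rightarrow> 'v set \<Rightarrow> bool" where
  "rooted_bipartite_colored_graph q V E ends col root rorig Bk \<longleftrightarrow>
     colored_graph q V E ends col \<and>
     root \<in> E \<and> col root = 0 \<and> rorig \<in> ends root \<and>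
     Bk \<subseteq> V \<and> (\<forall>e\<in>E. card (ends e \<inter> Bk) = 1) \<and> rorig \<in> Bk"

definition blk_end :: "('e \<Rightarrow> 'v set) \<Rightarrow> 'v set \<Rightarrow> 'e \<Rightarrow> 'v" where
  "blk_end ends Bk e = (THE v. v \<in> ends e \<and> v \<in> Bk)"

definition wht_end :: "('e \<Rightarrow> 'v set) \<Rightarrow> 'v set \<Rightarrow> 'e \<Rightarrow> 'v" where
  "wht_end ends Bk e = (THE v. v \<in> ends e \<and> v \<notin> Bk)"

definition inc_edge :: "'e set \<Rightarrow> ('e \<Rightarrow> 'v set) \<Rightarrow> ('e \<Rightarrow> nat) \<Rightarrow> 'v \<Rightarrow> nat \<Rightarrow> 'e" where
  "inc_edge E ends col v i = (THE e. e \<in> E \<and> v \<in> ends e \<and> col e = i)"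

text \<open>White vertices of S are the colour-0 edges of G (contracted).
  After contraction, the colour-i edge leaving (black end of) the contracted
  vertex w0 enters the contracted vertex containing its white end; this gives
  the successor map along the directed colour-i cycles.\<close>

definition white_verts :: "'e set \<Rightarrow> ('e \<Rightarrow> nat) \<Rightarrow> 'e set" where
  "white_verts E col = {e \<in> E. col e = 0}"

definition succ_i ::
  "'e set \<Rightarrow> ('e \<Rightarrow> 'v set) \<Rightarrow> ('e \<Rightarrow> nat) \<Rightarrow> 'v set \<Rightarrow> nat \<Rightarrow> 'e \<Rightarrow> 'e" where
  "succ_i E ends col Bk i w =
     inc_edge E ends col (wht_end ends Bk (inc_edge E ends col (blk_end ends Bk w) i)) 0"

definition cycle_i ::
  "'e set \<Rightarrow> ('e \<Rightarrow> 'v set) \<Rightarrow> ('e \<Rightarrow> nat) \<Rightarrow> 'v set \<Rightarrow> nat \<Rightarrow> 'e \<Rightarrow> 'e set" where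
  "cycle_i E ends col Bk i w = {(succ_i E ends col Bk i ^^ n) w | n. True}"

text \<open>Vertices of S: white vertices Inl w, and for each colour i in 1..q and each
  colour-i cycle C, a vertex Inr (i, C).\<close>

definition Psi_V :: "nat \<Rightarrow> 'e set \<Rightarrow> ('e \<Rightarrow> 'v set) \<Rightarrow> ('e \<Rightarrow> nat) \<Rightarrow> 'v set
    \<Rightarrow> ('e + nat \<times> 'e set) set" where
  "Psi_V q E ends col Bk =
     Inl ` white_verts E col \<union>
     {Inr (i, cycle_i E ends col Bk i w) | i w. i \<in> {1..q} \<and> w \<in> white_verts E col}"

definition Psi_E :: "nat \<Rightarrow> 'e set \<Rightarrow> ('e \<Rightarrow> 'v set) \<Rightarrow> ('e \<Rightarrow> nat) \<Rightarrow> 'v set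
    \<Rightarrow> ('e + nat \<times> 'e set) set set" where
  "Psi_E q E ends col Bk =
     {{Inl w, Inr (i, cycle_i E ends col Bk i w)} | i w. i \<in> {1..q} \<and> w \<in> white_verts E col}"

definition sg_reach :: "'a set set \<Rightarrow> ('a \<times> 'a) set" where
  "sg_reach ES = {(x, y). {x, y} \<in> ES}\<^sup>*"

definition sg_connected :: "'a set \<Rightarrow> 'a set set \<Rightarrow> bool" where
  "sg_connected VS ES \<longleftrightarrow> VS \<noteq> {} \<and> (\<forall>x\<in>VS. \<forall>y\<in>VS. (x, y) \<in> sg_reach ES)"

definition sg_component :: "'a set \<Rightarrow> 'a set set \<Rightarrow> 'a \<Rightarrow> 'a set" where
  "sg_component VS ES y = {x \<in> VS. (y, x) \<in> sg_reach ES}"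

definition sg_bridge :: "'a set \<Rightarrow> 'a set set \<Rightarrow> 'a set \<Rightarrow> bool" where
  "sg_bridge VS ES e \<longleftrightarrow> e \<in> ES \<and> \<not> sg_connected VS (ES - {e})"

definition sg_has_cycle :: "'a set \<Rightarrow> 'a set set \<Rightarrow> bool" where
  "sg_has_cycle VS ES \<longleftrightarrow> (\<exists>cs. length cs \<ge> 3 \<and> distinct cs \<and> set cs \<subseteq> VS \<and>
      (\<forall>j < length cs. {cs ! j, cs ! ((j + 1) mod length cs)} \<in> ES))"

definition sg_tree :: "'a set \<Rightarrow> 'a set set \<Rightarrow> bool" where
  "sg_tree VS ES \<longleftrightarrow> sg_connected VS ES \<and> \<not> sg_has_cycle VS ES"

definition induced_edges :: "'a set set \<Rightarrow> 'a set \<Rightarrow> 'a set set" where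
  "induced_edges ES K = {f \<in> ES. f \<subseteq> K}"

definition admissible ::
  "'e set \<Rightarrow> ('e \<Rightarrow> 'v set) \<Rightarrow> ('e \<Rightarrow> nat) \<Rightarrow> 'e \<Rightarrow> bool" where
  "admissible E ends col w \<longleftrightarrow>
     (\<exists>u v. ends w = {u, v} \<and> u \<noteq> v \<and>
        (u, v) \<in> (adj_rel {e \<in> E. col e \<noteq> 0} ends)\<^sup>*)"

end

theory Submission
  imports Defs
begin



lemma period_aux:
  assumes fin: "finite A" and inj: "inj_on f A" and cl: "f ` A \<subseteq> A" and x: "x \<in> A"
  shows "\<exists>n>0. (f ^^ n) x = x"
proof -
  have inA: "(f ^^ k) y \<in> A" if "y \<in> A" for k y
    using that by (induction k) (use cl in auto)
  have injk: "inj_on (f ^^ k) A" for k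
  proof (induction k)
    case 0 then show ?case by simp
  next
    case (Suc k)
    have "inj_on (f \<circ> (f ^^ k)) A"
      by (rule comp_inj_on[OF Suc]) (rule inj_on_subset[OF inj], use inA in auto)
    then show ?case by (simp add: comp_def)
  qed
  let ?g = "\<lambda>k. (f ^^ k) x"
  have "\<not> inj_on ?g {..card A}"
  proof
    assume "inj_on ?g {..card A}"
    moreover have "?g ` {..card A} \<subseteq> A" using inA x by auto
    ultimately have "card {..card A} \<le> card A" using card_inj_on_le fin by blast
    then show False by simp
  qed
  then obtain a b where ab: "a \<le> card A" "b \<le> card A" "a \<noteq> b" "?g a = ?g b"
    unfolding inj_on_def by auto
  then have "\<exists>a b. a < b \<and> ?g a = ?g b" by (metis nat_neq_iff)
  then obtain a b where ab: "a < b" "?g a = ?g b" by blast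
  have "(f ^^ a) ((f ^^ (b - a)) x) = (f ^^ a) x"
    using ab by (metis add_diff_inverse_nat comp_apply funpow_add less_imp_le not_le)
  then have "(f ^^ (b - a)) x = x"
    using injk[of a] inA[OF x] x unfolding inj_on_def by blast
  then show ?thesis using ab by (intro exI[of _ "b - a"]) auto
qed




lemma cycle_exists:
  fixes X :: "'a set" and ES :: "'a set set"
  assumes fin: "finite X" and v0: "v0 \<in> X"
    and two: "\<forall>f\<in>ES. card f = 2"
    and nb0: "\<exists>a\<in>X. {v0,a} \<in> ES"
    and nb: "\<forall>x\<in>X. x \<noteq> v0 \<longrightarrow> (\<exists>a\<in>X. \<exists>b\<in>X. a \<noteq> b \<and> {x,a} \<in> ES \<and> {x,b} \<in> ES)"
  shows "\<exists>cs. length cs \<ge> 3 \<and> distinct cs \<and> set cs \<subseteq> X \<and>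
      (\<forall>j<length cs. {cs!j, cs!((j+1) mod length cs)} \<in> ES)"
proof -
  define pth where "pth p \<longleftrightarrow> p \<noteq> [] \<and> hd p = v0 \<and> distinct p \<and> set p \<subseteq> X \<and>
      (\<forall>j. Suc j < length p \<longrightarrow> {p!j, p!Suc j} \<in> ES)" for p
  have main: "\<And>p. card X - length p = m \<Longrightarrow> pth p \<Longrightarrow> ?thesis" for m
  proof (induction m rule: less_induct)
    case (less m p)
    define n where "n = length p"
    define z where "z = last p"
    have pth: "pth p" by fact
    have n1: "n \<ge> 1" using pth unfolding pth_def n_def by (cases p) auto
    have zeq: "z = p ! (n - 1)" using pth unfolding pth_def z_def n_def by (simp add: last_conv_nth)
    have zX: "z \<in> X" using pth n1 unfolding pth_def zeq n_def by auto
    have hd0: "p ! 0 = v0" using pth unfolding pth_def by (metis hd_conv_nth)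
    obtain a where aX: "a \<in> X" and za: "{z,a} \<in> ES" and an: "n \<ge> 2 \<longrightarrow> a \<noteq> p!(n-2)"
    proof (cases "n = 1")
      case True
      then have "z = v0" using zeq hd0 by simp
      then show ?thesis using nb0 that True by auto
    next
      case False
      have dp: "distinct p" using pth unfolding pth_def by simp
      have "p ! (n - 1) \<noteq> p ! 0" using nth_eq_iff_index_eq[OF dp, of "n - 1" 0] False n1 n_def by (cases p) auto
      then have "z \<noteq> v0" using zeq hd0 by simp
      then obtain a b where "a \<in> X" "b \<in> X" "a \<noteq> b" "{z,a} \<in> ES" "{z,b} \<in> ES"
        using nb zX by blast
      then show ?thesis using that by metis
    qed
    have zna: "z \<noteq> a" using two za by (cases "z = a") auto
    show ?case
    proof (cases "a \<in> set p")
      case False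
      define p' where "p' = p @ [a]"
      have pth': "pth p'"
        using pth False aX za unfolding pth_def p'_def
        apply (auto simp: nth_append)
        subgoal for j
          apply (cases "Suc j < length p")
           apply simp
          apply (subgoal_tac "j = length p - 1")
          using zeq n_def by (auto simp: insert_commute)
        done
      have "length p' \<le> card X"
        using pth' fin unfolding pth_def by (metis card_mono distinct_card)
      then have "card X - length p' < m" using less.prems p'_def by simp
      then show ?thesis using less.IH[OF _ refl pth'] by blast
    next
      case True
      then obtain k where k: "k < n" "p ! k = a" unfolding n_def by (metis in_set_conv_nth)
      have "k \<noteq> n - 1" using zna zeq k by auto
      moreover have "n \<ge> 2 \<longrightarrow> k \<noteq> n - 2" using an k by auto
      ultimately have k3: "k + 3 \<le> n" using k n1 by (cases "n = 1") auto
      define cs where "cs = drop k p"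
      have lc: "length cs = n - k" unfolding cs_def n_def by simp
      have csj: "cs ! j = p ! (k + j)" if "j < n - k" for j
        unfolding cs_def using that n_def by simp
      show ?thesis
      proof (intro exI conjI allI impI)
        show "3 \<le> length cs" using lc k3 by simp
        show "distinct cs" using pth unfolding pth_def cs_def by simp
        show "set cs \<subseteq> X" using pth unfolding pth_def cs_def by (meson order_trans set_drop_subset)
      next
        fix j assume j: "j < length cs"
        show "{cs ! j, cs ! ((j + 1) mod length cs)} \<in> ES"
        proof (cases "j + 1 < length cs")
          case True
          then have "Suc (k + j) < length p" using lc n_def by simp
          then show ?thesis using pth True csj lc unfolding pth_def by auto
        next
          case False
          then have "j = n - k - 1" using j lc by simp
          moreover have "j + 1 = length cs" using False j by simp
          ultimately have "cs ! j = z" "(j+1) mod length cs = 0" using csj zeq lc k3 by auto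
          moreover have "cs ! 0 = a" using csj k k3 by simp
          ultimately show ?thesis using za by simp
        qed
      qed
    qed
  qed
  have "pth [v0]" unfolding pth_def using v0 by simp
  then show ?thesis using main by blast
qed




locale CG =
  fixes q :: nat and V :: "'v set" and E :: "'e set" and ends :: "'e \<Rightarrow> 'v set"
    and col :: "'e \<Rightarrow> nat" and Bk :: "'v set"
  assumes cg: "colored_graph q V E ends col"
    and bip: "\<forall>e\<in>E. card (ends e \<inter> Bk) = 1"
begin

abbreviation "W \<equiv> white_verts E col"
abbreviation "H \<equiv> adj_rel {e \<in> E. col e \<noteq> 0} ends"
abbreviation "bl \<equiv> blk_end ends Bk"
abbreviation "wh \<equiv> wht_end ends Bk"
abbreviation "ie \<equiv> inc_edge E ends col"
abbreviation "s \<equiv> succ_i E ends col Bk"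
abbreviation "cyc \<equiv> cycle_i E ends col Bk"

lemma finE: "finite E" using cg unfolding colored_graph_def by simp
lemma endsV: "f \<in> E \<Longrightarrow> ends f \<subseteq> V" using cg unfolding colored_graph_def by simp
lemma colq: "f \<in> E \<Longrightarrow> col f \<le> q" using cg unfolding colored_graph_def by simp
lemma card2: "f \<in> E \<Longrightarrow> card (ends f) = 2" using cg unfolding colored_graph_def by simp
lemma uniq: "v \<in> V \<Longrightarrow> i \<le> q \<Longrightarrow> \<exists>!e. e \<in> E \<and> v \<in> ends e \<and> col e = i"
  using cg unfolding colored_graph_def by simp

lemma ie_props:
  assumes "v \<in> V" "i \<le> q"
  shows "ie v i \<in> E" "v \<in> ends (ie v i)" "col (ie v i) = i"
  using theI'[OF uniq[OF assms]] unfolding inc_edge_def by auto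

lemma ie_eq:
  assumes "f \<in> E" "v \<in> ends f" "col f = i"
  shows "ie v i = f"
proof -
  have "v \<in> V" "i \<le> q" using assms endsV colq by auto
  then show ?thesis using the1_equality[OF uniq] assms unfolding inc_edge_def by blast
qed

lemma bw:
  assumes f: "f \<in> E"
  shows "bl f \<in> ends f" "bl f \<in> Bk" "wh f \<in> ends f" "wh f \<notin> Bk"
    "ends f = {bl f, wh f}" "bl f \<noteq> wh f"
proof -
  obtain a b where ab: "ends f = {a, b}" "a \<noteq> b" using card2[OF f] card_2_iff by metis
  have c1: "card ({a,b} \<inter> Bk) = 1" using bip f ab by auto
  have "(a \<in> Bk \<and> b \<notin> Bk) \<or> (b \<in> Bk \<and> a \<notin> Bk)"
    using c1 ab(2) by (cases "a \<in> Bk"; cases "b \<in> Bk") auto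
  then obtain x y where xy: "ends f = {x, y}" "x \<noteq> y" "x \<in> Bk" "y \<notin> Bk"
    using ab by (metis insert_commute)
  have "bl f = x" unfolding blk_end_def using xy by (intro the_equality) auto
  moreover have "wh f = y" unfolding wht_end_def using xy by (intro the_equality) auto
  ultimately show "bl f \<in> ends f" "bl f \<in> Bk" "wh f \<in> ends f" "wh f \<notin> Bk"
    "ends f = {bl f, wh f}" "bl f \<noteq> wh f" using xy by auto
qed

lemma bl_eq: "f \<in> E \<Longrightarrow> v \<in> ends f \<Longrightarrow> v \<in> Bk \<Longrightarrow> bl f = v"
  using bw[of f] by auto
lemma wh_eq: "f \<in> E \<Longrightarrow> v \<in> ends f \<Longrightarrow> v \<notin> Bk \<Longrightarrow> wh f = v"
  using bw[of f] by auto

lemma s_props: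
  assumes x: "x \<in> W" and j: "1 \<le> j" "j \<le> q"
  shows "s j x \<in> W" "(bl x, wh (s j x)) \<in> H"
    "wh (s j x) = wh (ie (bl x) j)"
proof -
  have xE: "x \<in> E" using x unfolding white_verts_def by simp
  define f where "f = ie (bl x) j"
  have blV: "bl x \<in> V" using bw[OF xE] endsV[OF xE] by auto
  have f: "f \<in> E" "bl x \<in> ends f" "col f = j" using ie_props[OF blV j(2)] f_def by auto
  have blf: "bl f = bl x" using bl_eq[OF f(1,2)] bw[OF xE] by simp
  have whV: "wh f \<in> V" using bw[OF f(1)] endsV[OF f(1)] by auto
  have sx: "s j x = ie (wh f) 0" unfolding succ_i_def f_def by simp
  have g: "s j x \<in> E" "wh f \<in> ends (s j x)" "col (s j x) = 0" using ie_props[OF whV, of 0] sx by auto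
  show "s j x \<in> W" using g unfolding white_verts_def by simp
  have wsx: "wh (s j x) = wh f" using wh_eq[OF g(1,2)] bw[OF f(1)] by simp
  then show "wh (s j x) = wh (ie (bl x) j)" using f_def by simp
  show "(bl x, wh (s j x)) \<in> H" unfolding adj_rel_def using f bw[OF f(1)] blf wsx j by force
qed

lemma s_inj:
  assumes j: "1 \<le> j" "j \<le> q"
  shows "inj_on (s j) W"
proof (rule inj_onI)
  fix x x' assume x: "x \<in> W" and x': "x' \<in> W" and eq: "s j x = s j x'"
  have xE: "x \<in> E" "x' \<in> E" using x x' unfolding white_verts_def by auto
  have c0: "col x = 0" "col x' = 0" using x x' unfolding white_verts_def by auto
  define f where "f = ie (bl x) j"
  define f' where "f' = ie (bl x') j"
  have blV: "bl x \<in> V" "bl x' \<in> V" using bw xE endsV by blast+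
  have f: "f \<in> E" "bl x \<in> ends f" "col f = j" using ie_props[OF blV(1) j(2)] f_def by auto
  have f': "f' \<in> E" "bl x' \<in> ends f'" "col f' = j" using ie_props[OF blV(2) j(2)] f'_def by auto
  have "wh f = wh f'" using s_props(3)[OF x j] s_props(3)[OF x' j] eq f_def f'_def by simp
  then have "f = f'" using ie_eq[OF f(1) _ f(3), of "wh f"] ie_eq[OF f'(1) _ f'(3), of "wh f'"] bw f f' by metis
  then have "bl x = bl x'" using bl_eq[OF f(1) f(2)] bl_eq[OF f'(1) f'(2)] bw xE by metis
  then show "x = x'" using ie_eq[OF xE(1) _ c0(1), of "bl x"] ie_eq[OF xE(2) _ c0(2), of "bl x'"] bw xE by metis
qed

lemma finW: "finite W" using finE unfolding white_verts_def by simp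

lemma s_pow_W: "x \<in> W \<Longrightarrow> 1 \<le> j \<Longrightarrow> j \<le> q \<Longrightarrow> (s j ^^ n) x \<in> W"
  by (induction n) (auto intro: s_props(1))

lemma period: "x \<in> W \<Longrightarrow> 1 \<le> j \<Longrightarrow> j \<le> q \<Longrightarrow> \<exists>n>0. (s j ^^ n) x = x"
  by (rule period_aux[OF finW s_inj]) (auto intro: s_props(1))

lemma cyc_W: "x \<in> W \<Longrightarrow> 1 \<le> j \<Longrightarrow> j \<le> q \<Longrightarrow> cyc j x \<subseteq> W"
  unfolding cycle_i_def using s_pow_W by auto

lemma in_cyc: "x \<in> cyc j x"
  unfolding cycle_i_def by (auto intro: exI[of _ 0])

lemma cyc_eq:
  assumes x: "x \<in> W" and j: "1 \<le> j" "j \<le> q" and z: "z \<in> cyc j x"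
  shows "cyc j z = cyc j x"
proof -
  obtain a where a: "z = (s j ^^ a) x" using z unfolding cycle_i_def by auto
  obtain N where N: "N > 0" "(s j ^^ N) x = x" using period[OF x j] by auto
  have NN: "(s j ^^ (N * k)) x = x" for k
  proof (induction k)
    case (Suc k)
    have "(s j ^^ (N * Suc k)) x = (s j ^^ N) ((s j ^^ (N * k)) x)"
      by (simp add: funpow_add add.commute)
    then show ?case using Suc N by simp
  qed simp
  have "(s j ^^ n) z \<in> cyc j x" for n
  proof -
    have "(s j ^^ n) z = (s j ^^ (n + a)) x" unfolding a by (simp add: funpow_add)
    then show ?thesis unfolding cycle_i_def by blast
  qed
  moreover have "(s j ^^ n) x \<in> cyc j z" for n
  proof -
    have "N * a \<ge> a" using N by simp
    then have e: "n + (N * a - a) + a = n + N * a" by linarith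
    have "(s j ^^ (n + (N * a - a))) z = (s j ^^ (n + (N * a - a) + a)) x"
      unfolding a by (simp add: funpow_add)
    also have "\<dots> = (s j ^^ n) ((s j ^^ (N * a)) x)" unfolding e by (simp add: funpow_add)
    finally have "(s j ^^ n) x = (s j ^^ (n + (N * a - a))) z" using NN[of a] by simp
    then show ?thesis unfolding cycle_i_def by blast
  qed
  ultimately show ?thesis unfolding cycle_i_def by blast
qed

end



context CG begin

lemma H_sym: "(a,b) \<in> H\<^sup>* \<Longrightarrow> (b,a) \<in> H\<^sup>*"
proof -
  have "sym H" unfolding adj_rel_def by (rule symI) (simp add: insert_commute)
  then have "sym (H\<^sup>*)" by (rule sym_rtrancl)
  then show "(a,b) \<in> H\<^sup>* \<Longrightarrow> (b,a) \<in> H\<^sup>*" unfolding sym_def by blast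
qed

lemma adm_iff:
  assumes x: "x \<in> W"
  shows "admissible E ends col x \<longleftrightarrow> (bl x, wh x) \<in> H\<^sup>*"
proof -
  have xE: "x \<in> E" using x unfolding white_verts_def by simp
  show ?thesis
  proof
    assume "admissible E ends col x"
    then obtain u v where uv: "ends x = {u,v}" "u \<noteq> v" "(u,v) \<in> H\<^sup>*"
      unfolding admissible_def by blast
    have "(u = bl x \<and> v = wh x) \<or> (u = wh x \<and> v = bl x)"
    proof -
      have "{u,v} = {bl x, wh x}" using uv bw[OF xE] by simp
      then show ?thesis by (simp add: doubleton_eq_iff)
    qed
    then show "(bl x, wh x) \<in> H\<^sup>*" using uv H_sym by blast
  next
    assume "(bl x, wh x) \<in> H\<^sup>*"
    then show "admissible E ends col x" unfolding admissible_def using bw[OF xE] by blast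
  qed
qed

lemma chain:
  assumes x0: "x0 \<in> W" and j: "1 \<le> j" "j \<le> q"
    and all: "\<forall>z\<in>cyc j x0. z \<noteq> x0 \<longrightarrow> admissible E ends col z"
  shows "admissible E ends col x0"
proof (rule ccontr)
  assume na: "\<not> admissible E ends col x0"
  then have nr: "(bl x0, wh x0) \<notin> H\<^sup>*" using adm_iff[OF x0] by simp
  have Q: "(bl x0, wh ((s j ^^ Suc k) x0)) \<in> H\<^sup>*" for k
  proof (induction k)
    case 0 then show ?case using s_props(2)[OF x0 j] by simp
  next
    case (Suc k)
    define z where "z = (s j ^^ Suc k) x0"
    have zW: "z \<in> W" unfolding z_def by (rule s_pow_W[OF x0 j])
    have "z \<noteq> x0"
    proof
      assume "z = x0" then show False using Suc.IH nr unfolding z_def by simp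
    qed
    moreover have "z \<in> cyc j x0" unfolding cycle_i_def z_def by blast
    ultimately have "admissible E ends col z" using all by blast
    then have "(bl z, wh z) \<in> H\<^sup>*" using adm_iff[OF zW] by simp
    then have "(wh z, bl z) \<in> H\<^sup>*" by (rule H_sym)
    moreover have "(bl z, wh (s j z)) \<in> H" by (rule s_props(2)[OF zW j])
    ultimately have "(wh z, wh (s j z)) \<in> H\<^sup>*" by simp
    moreover have "s j z = (s j ^^ Suc (Suc k)) x0" unfolding z_def by simp
    moreover have "(bl x0, wh z) \<in> H\<^sup>*" using Suc z_def by simp
    ultimately show ?case by (metis (no_types) rtrancl_trans)
  qed
  obtain N where N: "N > 0" "(s j ^^ N) x0 = x0" using period[OF x0 j] by blast
  have "Suc (N - 1) = N" using N by simp
  then show False using Q[of "N - 1"] N nr by simp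
qed

lemma chain':
  assumes x0: "x0 \<in> W" and j: "1 \<le> j" "j \<le> q" and na: "\<not> admissible E ends col x0"
  shows "\<exists>z\<in>cyc j x0. z \<noteq> x0 \<and> \<not> admissible E ends col z"
  using chain[OF x0 j] na by blast

end



lemma reach_split:
  assumes "(a,b) \<in> sg_reach ES"
  shows "(a,b) \<in> sg_reach (ES - {e}) \<or> (\<exists>z\<in>e. (a,z) \<in> sg_reach (ES - {e}))"
  using assms unfolding sg_reach_def
proof (induction rule: rtrancl_induct)
  case base then show ?case by simp
next
  case (step b c)
  show ?case
  proof (cases "{b,c} = e")
    case True
    then show ?thesis using step.IH by auto
  next
    case False
    then have "(b,c) \<in> {(x, y). {x, y} \<in> ES - {e}}" using step.hyps(2) by auto
    then show ?thesis using step.IH by (meson rtrancl.rtrancl_into_rtrancl)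
  qed
qed

lemma reach_sym: "(a,b) \<in> sg_reach ES \<Longrightarrow> (b,a) \<in> sg_reach ES"
proof -
  have "sym {(x, y). {x, y} \<in> ES}" by (rule symI) (simp add: insert_commute)
  then have "sym (sg_reach ES)" unfolding sg_reach_def by (rule sym_rtrancl)
  then show "(a,b) \<in> sg_reach ES \<Longrightarrow> (b,a) \<in> sg_reach ES" unfolding sym_def by blast
qed

lemma reach_edge: "{a,b} \<in> ES \<Longrightarrow> (a,b) \<in> sg_reach ES"
  unfolding sg_reach_def by auto

context CG begin

abbreviation "PV \<equiv> Psi_V q E ends col Bk"
abbreviation "PE \<equiv> Psi_E q E ends col Bk"

lemma edge_in: "x \<in> W \<Longrightarrow> 1 \<le> j \<Longrightarrow> j \<le> q \<Longrightarrow> {Inl x, Inr (j, cyc j x)} \<in> PE"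
  unfolding Psi_E_def by auto

lemma step_s:
  assumes x: "x \<in> W" and j: "1 \<le> j" "j \<le> q"
  shows "(Inl x, Inl (s j x)) \<in> sg_reach PE"
proof -
  have sxW: "s j x \<in> W" using s_props(1)[OF x j] .
  have "s j x \<in> cyc j x" unfolding cycle_i_def by (auto intro: exI[of _ 1])
  then have ceq: "cyc j (s j x) = cyc j x" using cyc_eq[OF x j] by blast
  have "(Inl x, Inr (j, cyc j x)) \<in> sg_reach PE" using edge_in[OF x j] by (rule reach_edge)
  moreover have "(Inr (j, cyc j x), Inl (s j x)) \<in> sg_reach PE"
    using edge_in[OF sxW j] ceq by (intro reach_edge) (simp add: insert_commute)
  ultimately show ?thesis unfolding sg_reach_def by (rule rtrancl_trans)
qed

lemma ie0W: "v \<in> V \<Longrightarrow> ie v 0 \<in> W"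
  using ie_props[of v 0] unfolding white_verts_def by auto

lemma adj_step:
  assumes "(a,c) \<in> adj_rel E ends"
  shows "(Inl (ie a 0), Inl (ie c 0)) \<in> sg_reach PE"
proof -
  obtain f where f: "f \<in> E" "ends f = {a,c}" using assms unfolding adj_rel_def by auto
  have aV: "a \<in> V" and cV: "c \<in> V" using endsV[OF f(1)] f(2) by auto
  show ?thesis
  proof (cases "col f = 0")
    case True
    then have "ie a 0 = f" "ie c 0 = f" using ie_eq[OF f(1), of a 0] ie_eq[OF f(1), of c 0] f(2) by auto
    then show ?thesis unfolding sg_reach_def by simp
  next
    case False
    define j where "j = col f"
    have j: "1 \<le> j" "j \<le> q" using False colq[OF f(1)] j_def by auto
    have gen: "(Inl (ie a' 0), Inl (ie c' 0)) \<in> sg_reach PE"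
      if ac: "a' = bl f" "c' = wh f" for a' c'
    proof -
      have a'V: "a' \<in> V" using ac bw[OF f(1)] endsV[OF f(1)] by auto
      define x where "x = ie a' 0"
      have xW: "x \<in> W" using ie0W[OF a'V] x_def by simp
      have x: "x \<in> E" "a' \<in> ends x" using ie_props[OF a'V, of 0] x_def by auto
      have blx: "bl x = a'" using bl_eq[OF x] ac bw[OF f(1)] by simp
      have "ie (bl x) j = f" using ie_eq[OF f(1)] blx ac bw[OF f(1)] j_def by simp
      then have "s j x = ie c' 0" unfolding succ_i_def using ac by simp
      then show ?thesis using step_s[OF xW j] x_def by simp
    qed
    have "(a = bl f \<and> c = wh f) \<or> (c = bl f \<and> a = wh f)"
    proof -
      have "{a,c} = {bl f, wh f}" using f bw[OF f(1)] by simp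
      then show ?thesis by (auto simp: doubleton_eq_iff)
    qed
    then show ?thesis
    proof
      assume "a = bl f \<and> c = wh f" then show ?thesis using gen[of a c] by simp
    next
      assume "c = bl f \<and> a = wh f"
      then have "(Inl (ie c 0), Inl (ie a 0)) \<in> sg_reach PE" using gen[of c a] by simp
      then show ?thesis by (rule reach_sym)
    qed
  qed
qed

lemma conn:
  assumes "v \<in> V" "v' \<in> V"
  shows "(Inl (ie v 0), Inl (ie v' 0)) \<in> sg_reach PE"
proof -
  have "(v, v') \<in> (adj_rel E ends)\<^sup>*" using cg assms unfolding colored_graph_def mg_connected_def by blast
  then show ?thesis
  proof (induction rule: rtrancl_induct)
    case base then show ?case unfolding sg_reach_def by simp
  next
    case (step b c)
    then show ?case using adj_step[OF step(2)] unfolding sg_reach_def by (meson rtrancl_trans)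
  qed
qed

lemma W_ie: "x \<in> W \<Longrightarrow> \<exists>v\<in>V. ie v 0 = x"
proof -
  assume x: "x \<in> W"
  then have xE: "x \<in> E" "col x = 0" unfolding white_verts_def by auto
  have "bl x \<in> V" using bw[OF xE(1)] endsV[OF xE(1)] by auto
  moreover have "ie (bl x) 0 = x" using ie_eq[OF xE(1) _ xE(2)] bw[OF xE(1)] by simp
  ultimately show ?thesis by blast
qed

lemma all_reach:
  assumes p: "p \<in> PV" and x: "x \<in> W"
  shows "(p, Inl x) \<in> sg_reach PE"
proof -
  have lr: "(Inl x', Inl x) \<in> sg_reach PE" if "x' \<in> W" for x'
    using W_ie[OF that] W_ie[OF x] conn by blast
  from p consider (l) x' where "p = Inl x'" "x' \<in> W"
    | (r) j x' where "p = Inr (j, cyc j x')" "x' \<in> W" "1 \<le> j" "j \<le> q"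
    unfolding Psi_V_def by auto
  then show ?thesis
  proof cases
    case l then show ?thesis using lr by simp
  next
    case r
    have "(p, Inl x') \<in> sg_reach PE" using edge_in[OF r(2-4)] r(1)
      by (intro reach_edge) (simp add: insert_commute)
    then show ?thesis using lr[OF r(2)] unfolding sg_reach_def by (meson rtrancl_trans)
  qed
qed

lemma PV_Inr: "Inr (j, D) \<in> PV \<Longrightarrow> \<exists>x'. D = cyc j x' \<and> x' \<in> W \<and> 1 \<le> j \<and> j \<le> q"
  unfolding Psi_V_def by auto

lemma finPV: "finite PV"
proof -
  have eq: "{Inr (i, cyc i w) | i w. i \<in> {1..q} \<and> w \<in> W} = (\<lambda>(i,w). Inr (i, cyc i w)) ` ({1..q} \<times> W)"
    by auto
  show ?thesis unfolding Psi_V_def eq using finW by simp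
qed

end



theorem mainTheorem5:
  fixes q :: nat and V :: "'v set" and E :: "'e set" and ends :: "'e \<Rightarrow> 'v set"
    and col :: "'e \<Rightarrow> nat" and root :: 'e and rorig :: 'v and Bk :: "'v set"
    and w :: 'e and e :: "('e + nat \<times> 'e set) set" and y :: "'e + nat \<times> 'e set"
  assumes "q \<ge> 2"
    and "rooted_bipartite_colored_graph q V E ends col root rorig Bk"
    and "w \<in> white_verts E col"
    and "Inl w \<in> e"
    and "sg_bridge (Psi_V q E ends col Bk) (Psi_E q E ends col Bk) e"
    and "y \<in> Psi_V q E ends col Bk"
    and "Inl w \<notin> sg_component (Psi_V q E ends col Bk) (Psi_E q E ends col Bk - {e}) y"
    and "sg_tree (sg_component (Psi_V q E ends col Bk) (Psi_E q E ends col Bk - {e}) y)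
           (induced_edges (Psi_E q E ends col Bk - {e})
              (sg_component (Psi_V q E ends col Bk) (Psi_E q E ends col Bk - {e}) y))"
  shows "admissible E ends col w"
proof (rule ccontr)
  assume naw: "\<not> admissible E ends col w"
  note q2 = assms(1) and wW = assms(3) and we = assms(4) and br = assms(5) and yV = assms(6)
    and wT = assms(7) and tree = assms(8)
  interpret CG q V E ends col Bk
    using assms(2) unfolding rooted_bipartite_colored_graph_def by unfold_locales auto
  define T where "T = sg_component PV (PE - {e}) y"
  define ES' where "ES' = induced_edges (PE - {e}) T"
  define nadm where "nadm x \<longleftrightarrow> x \<in> W \<and> \<not> admissible E ends col x" for x
  have eP: "e \<in> PE" using br unfolding sg_bridge_def by simp
  then obtain i w' where iw': "e = {Inl w', Inr (i, cyc i w')}" "1 \<le> i" "i \<le> q" "w' \<in> W"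
    unfolding Psi_E_def by auto
  have "w' = w" using we iw'(1) by auto
  define C where "C = cyc i w"
  have eeq: "e = {Inl w, Inr (i, C)}" using iw' \<open>w' = w\<close> C_def by simp
  have i: "1 \<le> i" "i \<le> q" using iw' by auto
  have TV: "T \<subseteq> PV" unfolding T_def sg_component_def by auto
  have PE_PV: "f \<in> PE \<Longrightarrow> f \<subseteq> PV" for f unfolding Psi_E_def Psi_V_def by auto
  have wPV: "Inl w \<in> PV" using wW unfolding Psi_V_def by auto
  have CPV: "Inr (i, C) \<in> PV" using wW i unfolding Psi_V_def C_def by auto
  have "(y, Inl w) \<in> sg_reach PE" using all_reach[OF yV wW] .
  from reach_split[OF this, of e]
  have "\<exists>z\<in>e. (y, z) \<in> sg_reach (PE - {e})"
  proof
    assume "(y, Inl w) \<in> sg_reach (PE - {e})"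
    then have "Inl w \<in> T" unfolding T_def sg_component_def using wPV by simp
    then show ?thesis using wT T_def by simp
  qed
  then obtain z where "z \<in> e" "(y, z) \<in> sg_reach (PE - {e})" by blast
  moreover have "z \<noteq> Inl w"
  proof
    assume "z = Inl w"
    then have "Inl w \<in> T" unfolding T_def sg_component_def using wPV calculation by simp
    then show False using wT T_def by simp
  qed
  ultimately have CT: "Inr (i, C) \<in> T" unfolding T_def sg_component_def using CPV eeq by auto
  have wnT: "Inl w \<notin> T" using wT T_def by simp
  have clos: "a \<in> T \<and> {u, a} \<in> ES'" if u: "u \<in> T" and ua: "{u, a} \<in> PE" "{u, a} \<noteq> e" for u a
  proof -
    have aPV: "a \<in> PV" using PE_PV[OF ua(1)] by auto
    have "(y, u) \<in> sg_reach (PE - {e})" using u unfolding T_def sg_component_def by simp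
    moreover have "(u, a) \<in> sg_reach (PE - {e})" using ua by (intro reach_edge) simp
    ultimately have "(y, a) \<in> sg_reach (PE - {e})" unfolding sg_reach_def by (rule rtrancl_trans)
    then have aT: "a \<in> T" unfolding T_def sg_component_def using aPV by simp
    then show ?thesis using u ua unfolding ES'_def induced_edges_def by auto
  qed
  define X where "X = {p \<in> T. (\<exists>x. p = Inl x \<and> nadm x) \<or> (\<exists>j D. p = Inr (j, D) \<and> (\<exists>x\<in>D. nadm x))}"
  have XT: "X \<subseteq> T" unfolding X_def by blast
  have "X \<subseteq> PV" using XT TV by blast
  then have finX: "finite X" using finPV by (rule finite_subset)
  have "w \<in> C" "nadm w" using in_cyc[of w i] naw wW unfolding C_def nadm_def by auto
  then have v0X: "Inr (i, C) \<in> X" unfolding X_def using CT by blast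
  have two: "\<forall>f\<in>ES'. card f = 2"
  proof
    fix f assume "f \<in> ES'"
    then have "f \<in> PE" unfolding ES'_def induced_edges_def by simp
    then obtain j x where "f = {Inl x, Inr (j, cyc j x)}" unfolding Psi_E_def by blast
    then show "card f = 2" by simp
  qed
  have nb0: "\<exists>a\<in>X. {Inr (i, C), a} \<in> ES'"
  proof -
    obtain z where z: "z \<in> cyc i w" "z \<noteq> w" "\<not> admissible E ends col z"
      using chain'[OF wW i naw] by blast
    have zW: "z \<in> W" using z(1) cyc_W[OF wW i] by auto
    have cz: "cyc i z = C" using cyc_eq[OF wW i z(1)] C_def by simp
    have ed: "{Inr (i, C), Inl z} \<in> PE" using edge_in[OF zW i] cz by (simp add: insert_commute)
    have ne: "{Inr (i, C), Inl z} \<noteq> e" using eeq z(2) by (auto simp: doubleton_eq_iff)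
    from clos[OF CT ed ne] have "Inl z \<in> T" "{Inr (i, C), Inl z} \<in> ES'" by auto
    moreover have "Inl z \<in> X" unfolding X_def nadm_def using calculation zW z by auto
    ultimately show ?thesis by blast
  qed
  have nb: "\<forall>p\<in>X. p \<noteq> Inr (i, C) \<longrightarrow> (\<exists>a\<in>X. \<exists>b\<in>X. a \<noteq> b \<and> {p, a} \<in> ES' \<and> {p, b} \<in> ES')"
  proof (intro ballI impI)
    fix p assume pX: "p \<in> X" and pv: "p \<noteq> Inr (i, C)"
    have pT: "p \<in> T" using pX XT by auto
    from pX consider (l) x where "p = Inl x" "nadm x" | (r) j D x where "p = Inr (j, D)" "x \<in> D" "nadm x"
      unfolding X_def by blast
    then show "\<exists>a\<in>X. \<exists>b\<in>X. a \<noteq> b \<and> {p, a} \<in> ES' \<and> {p, b} \<in> ES'"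
    proof cases
      case l
      have xW: "x \<in> W" using l nadm_def by simp
      have xw: "x \<noteq> w" using l pT wnT by auto
      have nbj: "Inr (j, cyc j x) \<in> X \<and> {p, Inr (j, cyc j x)} \<in> ES'" if j: "1 \<le> j" "j \<le> q" for j
      proof -
        have ed: "{p, Inr (j, cyc j x)} \<in> PE" using edge_in[OF xW j] l by simp
        have ne: "{p, Inr (j, cyc j x)} \<noteq> e" using eeq xw l by (auto simp: doubleton_eq_iff)
        from clos[OF pT ed ne] have h: "Inr (j, cyc j x) \<in> T" "{p, Inr (j, cyc j x)} \<in> ES'" by auto
        have "Inr (j, cyc j x) \<in> X" unfolding X_def using h(1) in_cyc[of x j] l(2) by blast
        then show ?thesis using h(2) by blast
      qed
      have A: "Inr (1, cyc 1 x) \<in> X \<and> {p, Inr (1, cyc 1 x)} \<in> ES'" using nbj[of 1] q2 by simp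
      have B: "Inr (2, cyc 2 x) \<in> X \<and> {p, Inr (2, cyc 2 x)} \<in> ES'" using nbj[of 2] q2 by simp
      have neq: "Inr (1::nat, cyc 1 x) \<noteq> Inr (2, cyc 2 x)" by simp
      show ?thesis
        apply (rule bexI[of _ "Inr (1, cyc 1 x)"])
         apply (rule bexI[of _ "Inr (2, cyc 2 x)"])
          apply (intro conjI)
        using A B neq by simp_all
    next
      case r
      have pPV: "Inr (j, D) \<in> PV" using pT TV r(1) by auto
      obtain x' where jx': "D = cyc j x'" "x' \<in> W" "1 \<le> j" "j \<le> q"
        using PV_Inr[OF pPV] by (elim exE conjE)
      have jj: "D = cyc j x'" using jx' by simp
      have j: "1 \<le> j" "j \<le> q" using jx' by auto
      have xW: "x \<in> W" using r nadm_def by simp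
      have cx: "cyc j x = D" using cyc_eq[OF jx'(2) j] r(2) jj by simp
      have nax: "\<not> admissible E ends col x" using r(3) unfolding nadm_def by simp
      obtain z where z: "z \<in> cyc j x" "z \<noteq> x" "\<not> admissible E ends col z"
        using chain'[OF xW j nax] by blast
      have zW: "z \<in> W" using z(1) cyc_W[OF xW j] by auto
      have cz: "cyc j z = D" using cyc_eq[OF xW j z(1)] cx by simp
      have nbz: "Inl u \<in> X \<and> {p, Inl u} \<in> ES'" if u: "u \<in> W" "cyc j u = D" "nadm u" for u
      proof -
        have ed0: "{Inl u, Inr (j, D)} \<in> PE" using edge_in[OF u(1) j] u(2) by simp
        have "{Inl u, Inr (j, D)} = {p, Inl u}" using r(1) by blast
        then have ed: "{p, Inl u} \<in> PE" using ed0 by simp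
        have ne: "{p, Inl u} \<noteq> e"
        proof
          assume "{p, Inl u} = e"
          then have "p \<in> e" by blast
          then have "p = Inl w \<or> p = Inr (i, C)" using eeq by blast
          then show False using pv r(1) by simp
        qed
        from clos[OF pT ed ne] have h: "Inl u \<in> T" "{p, Inl u} \<in> ES'" by auto
        have "Inl u \<in> X" unfolding X_def using h(1) u(3) by blast
        then show ?thesis using h(2) by blast
      qed
      have xx: "Inl x \<in> X \<and> {p, Inl x} \<in> ES'" using nbz[OF xW cx r(3)] .
      have nz: "nadm z" using zW z(3) nadm_def by simp
      have zz: "Inl z \<in> X \<and> {p, Inl z} \<in> ES'" using nbz[OF zW cz nz] .
      have neq: "Inl x \<noteq> Inl z" using z(2) by simp
      show ?thesis
        apply (rule bexI[of _ "Inl x"])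
         apply (rule bexI[of _ "Inl z"])
          apply (intro conjI)
        using xx zz neq by simp_all
    qed
  qed
  obtain cs where cs: "length cs \<ge> 3" "distinct cs" "set cs \<subseteq> X"
      "\<forall>j<length cs. {cs!j, cs!((j+1) mod length cs)} \<in> ES'"
    using cycle_exists[OF finX v0X two nb0 nb] by blast
  have csT: "set cs \<subseteq> T" using cs(3) XT by (rule order_trans)
  have "sg_has_cycle T ES'" unfolding sg_has_cycle_def
    by (rule exI[of _ cs]) (use cs csT in auto)
  moreover have "\<not> sg_has_cycle T ES'" using tree unfolding sg_tree_def T_def ES'_def by blast
  ultimately show False by contradiction
qed



end
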